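(* Let $(X,T)$ be a topologically transitive system. Then either $(X,T)$ is thickly sensitive (and then $\mathrm{Eq}_{\mathrm{syn}}(X,T)=\varnothing$), or $\mathrm{Tran}(X,T)\subset \mathrm{Eq}_{\mathrm{syn}}(X,T)$. In particular, if $(X,T)$ is minimal then it is either thickly sensitive or syndetically equicontinuous.
   Context: $(X,\varrho)$ compact metric, $T$ continuous surjection. $S_T(U,\delta)=\{n\in\mathbb{N}:\exists x_1,x_2\in U,\ \varrho(T^nx_1,T^nx_2)>\delta\}$ and $J_T(U,\delta)=\mathbb N\setminus S_T(U,\delta)$. A set $\mathcal S\subset\mathbb N$ is thick if it contains arbitrarily long blocks of consecutive integers, syndetic if it has bounded gaps (there is $m$ with $\mathcal S\cap\{n,\dots,n+m\}\ne\varnothing$ for all $n$). $(X,T)$ is thickly sensitive if there is $\delta>0$ with $S_T(U,\delta)$ thick for all opene $U$. A point $x$ is syndetically equicontinuous if for every $\varepsilon>0$ there is a neighborhood $U$ of $x$ with $J_T(U,\varepsilon)$ syndetic; $\mathrm{Eq}_{\mathrm{syn}}(X,T)$ is the set of such points, and $(X,T)$ is syndetically equicontinuous if $\mathrm{Eq}_{\mathrm{syn}}(X,T)=X$. $\mathrm{Tran}(X,T)$ is the set of points with dense orbit; transitive means $\mathrm{Tran}(X,T)\ne\varnothing$; minimal means $\mathrm{Tran}(X,T)=X$. *)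

theory Defs
  imports "HOL-Analysis.Analysis"
begin

definition tds :: "'a::metric_space set \<Rightarrow> ('a \<Rightarrow> 'a) \<Rightarrow> bool" where
  "tds X T \<longleftrightarrow> compact X \<and> continuous_on X T \<and> T ` X = X"

definition S_T :: "('a::metric_space \<Rightarrow> 'a) \<Rightarrow> 'a set \<Rightarrow> real \<Rightarrow> nat set" where
  "S_T T U \<delta> = {n. \<exists>x1\<in>U. \<exists>x2\<in>U. dist ((T ^^ n) x1) ((T ^^ n) x2) > \<delta>}"

definition J_T :: "('a::metric_space \<Rightarrow> 'a) \<Rightarrow> 'a set \<Rightarrow> real \<Rightarrow> nat set" where
  "J_T T U \<delta> = UNIV - S_T T U \<delta>"

definition thick :: "nat set \<Rightarrow> bool" where
  "thick S \<longleftrightarrow> (\<forall>k. \<exists>n. {n..n+k} \<subseteq> S)"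

definition syndetic :: "nat set \<Rightarrow> bool" where
  "syndetic S \<longleftrightarrow> (\<exists>m. \<forall>n. S \<inter> {n..n+m} \<noteq> {})"

definition thickly_sensitive :: "'a::metric_space set \<Rightarrow> ('a \<Rightarrow> 'a) \<Rightarrow> bool" where
  "thickly_sensitive X T \<longleftrightarrow>
     (\<exists>\<delta>>0. \<forall>U. openin (top_of_set X) U \<and> U \<noteq> {} \<longrightarrow> thick (S_T T U \<delta>))"

definition Eq_syn :: "'a::metric_space set \<Rightarrow> ('a \<Rightarrow> 'a) \<Rightarrow> 'a set" where
  "Eq_syn X T = {x\<in>X. \<forall>\<epsilon>>0. \<exists>U. openin (top_of_set X) U \<and> x \<in> U \<and> syndetic (J_T T U \<epsilon>)}"

definition syndetically_equicontinuous :: "'a::metric_space set \<Rightarrow> ('a \<Rightarrow> 'a) \<Rightarrow> bool" where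
  "syndetically_equicontinuous X T \<longleftrightarrow> Eq_syn X T = X"

definition Tran :: "'a::metric_space set \<Rightarrow> ('a \<Rightarrow> 'a) \<Rightarrow> 'a set" where
  "Tran X T = {x\<in>X. X \<subseteq> closure {(T ^^ n) x | n. True}}"

definition transitive_sys :: "'a::metric_space set \<Rightarrow> ('a \<Rightarrow> 'a) \<Rightarrow> bool" where
  "transitive_sys X T \<longleftrightarrow> Tran X T \<noteq> {}"

definition minimal_sys :: "'a::metric_space set \<Rightarrow> ('a \<Rightarrow> 'a) \<Rightarrow> bool" where
  "minimal_sys X T \<longleftrightarrow> Tran X T = X"

end

theory Submission
  imports Defs
begin

lemma funpow_maps:
  assumes "T ` X = X" "x \<in> X" shows "(T ^^ k) x \<in> X"
  using assms by (induction k) auto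

lemma funpow_cont:
  assumes "continuous_on X T" "T ` X = X" shows "continuous_on X (T ^^ k)"
proof (induction k)
  case 0 then show ?case by (simp add: continuous_on_id)
next
  case (Suc k)
  have "continuous_on X (T \<circ> (T ^^ k))"
    by (rule continuous_on_compose[OF Suc]) (metis assms continuous_on_subset funpow_maps image_subsetI)
  then show ?case by (simp add: o_def)
qed

lemma thick_syn_disj:
  assumes "thick (S_T T U d)" "syndetic (J_T T U d)" shows False
proof -
  obtain m where m: "\<forall>n. J_T T U d \<inter> {n..n+m} \<noteq> {}" using assms(2) unfolding syndetic_def by blast
  obtain n where "{n..n+m} \<subseteq> S_T T U d" using assms(1) unfolding thick_def by blast
  with m[rule_format, of n] show False unfolding J_T_def by blast
qed

lemma not_thick_syn:
  assumes "\<not> thick S" shows "syndetic (UNIV - S)"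
  using assms unfolding thick_def syndetic_def by blast

lemma shift_syn:
  assumes "syndetic J" "\<And>n. n \<in> J \<Longrightarrow> n + k \<in> J'" shows "syndetic J'"
proof -
  obtain m where m: "\<forall>n. J \<inter> {n..n+m} \<noteq> {}" using assms(1) unfolding syndetic_def by blast
  have "J' \<inter> {n..n+(m+k)} \<noteq> {}" for n
  proof -
    obtain j where j: "j \<in> J" "n - k \<le> j" "j \<le> n - k + m" using m[rule_format, of "n-k"] by auto
    have "j + k \<in> J'" using assms(2) j by auto
    moreover have "n \<le> j + k" "j + k \<le> n + (m+k)" using j by auto
    ultimately show ?thesis by auto
  qed
  then show ?thesis unfolding syndetic_def by blast
qed

lemma main1:
  assumes tds: "tds X T" and nts: "\<not> thickly_sensitive X T"
  shows "Tran X T \<subseteq> Eq_syn X T"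
proof
  fix x assume xT: "x \<in> Tran X T"
  have xX: "x \<in> X" and cl: "X \<subseteq> closure {(T ^^ n) x | n. True}" using xT unfolding Tran_def by auto
  have cT: "continuous_on X T" and TX: "T ` X = X" using tds unfolding tds_def by auto
  have "\<exists>U. openin (top_of_set X) U \<and> x \<in> U \<and> syndetic (J_T T U e)" if e: "e > 0" for e
  proof -
    obtain U where U: "openin (top_of_set X) U" "U \<noteq> {}" "\<not> thick (S_T T U e)"
      using nts e unfolding thickly_sensitive_def by blast
    have synU: "syndetic (J_T T U e)" using not_thick_syn[OF U(3)] unfolding J_T_def .
    obtain W where W: "open W" "U = X \<inter> W" using U(1) by (auto simp: openin_open)
    obtain u where u: "u \<in> U" using U(2) by blast
    then have "u \<in> closure {(T ^^ n) x | n. True}" using cl W by auto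
    then have "W \<inter> closure {(T ^^ n) x | n. True} \<noteq> {}" using W u by auto
    then have "W \<inter> {(T ^^ n) x | n. True} \<noteq> {}" using open_Int_closure_eq_empty[OF W(1)] by blast
    then obtain k where k: "(T ^^ k) x \<in> W" by blast
    have kU: "(T ^^ k) x \<in> U" using k W funpow_maps[OF TX xX] by auto
    define V where "V = X \<inter> (T ^^ k) -` U"
    have Vo: "openin (top_of_set X) V" unfolding V_def
      by (rule continuous_openin_preimage[OF funpow_cont[OF cT TX] _ U(1)]) (auto intro: funpow_maps[OF TX])
    have xV: "x \<in> V" using xX kU unfolding V_def by auto
    have "syndetic (J_T T V e)"
    proof (rule shift_syn[OF synU])
      fix n assume n: "n \<in> J_T T U e"
      show "n + k \<in> J_T T V e"
      proof -
        have "dist ((T ^^ (n+k)) y1) ((T ^^ (n+k)) y2) \<le> e" if "y1 \<in> V" "y2 \<in> V" for y1 y2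
        proof -
          have "(T ^^ k) y1 \<in> U" "(T ^^ k) y2 \<in> U" using that unfolding V_def by auto
          with n have "\<not> dist ((T ^^ n) ((T ^^ k) y1)) ((T ^^ n) ((T ^^ k) y2)) > e"
            unfolding J_T_def S_T_def by blast
          then show ?thesis by (simp add: funpow_add)
        qed
        then show ?thesis unfolding J_T_def S_T_def by (auto simp: not_less)
      qed
    qed
    then show ?thesis using Vo xV by blast
  qed
  then show "x \<in> Eq_syn X T" unfolding Eq_syn_def using xX by blast
qed

lemma main2:
  assumes "thickly_sensitive X T" shows "Eq_syn X T = {}"
proof (rule ccontr)
  assume "Eq_syn X T \<noteq> {}"
  then obtain x where x: "x \<in> Eq_syn X T" by blast
  obtain d where d: "d > 0" "\<forall>U. openin (top_of_set X) U \<and> U \<noteq> {} \<longrightarrow> thick (S_T T U d)"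
    using assms unfolding thickly_sensitive_def by blast
  obtain U where "openin (top_of_set X) U" "x \<in> U" "syndetic (J_T T U d)"
    using x d(1) unfolding Eq_syn_def by blast
  then show False using d(2) thick_syn_disj by blast
qed

theorem theorem3p4:
  fixes X :: "'a::metric_space set" and T :: "'a \<Rightarrow> 'a"
  assumes "tds X T"
  shows "(transitive_sys X T \<longrightarrow>
            ((thickly_sensitive X T \<and> Eq_syn X T = {}) \<or> Tran X T \<subseteq> Eq_syn X T))
       \<and> (minimal_sys X T \<longrightarrow>
            thickly_sensitive X T \<or> syndetically_equicontinuous X T)"
proof -
  have A: "(thickly_sensitive X T \<and> Eq_syn X T = {}) \<or> Tran X T \<subseteq> Eq_syn X T"
    using main1[OF assms] main2 by blast
  have "Eq_syn X T \<subseteq> X" unfolding Eq_syn_def by auto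
  moreover have "X = {} \<Longrightarrow> thickly_sensitive X T"
  proof -
    assume "X = {}"
    then have "\<And>U. openin (top_of_set X) U \<Longrightarrow> U = {}" using openin_subset by fastforce
    then show ?thesis unfolding thickly_sensitive_def using zero_less_one by blast
  qed
  ultimately show ?thesis using A unfolding minimal_sys_def syndetically_equicontinuous_def by blast
qed

end
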